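(* Consider a source, a destination and $M \geq 1$ relays. Let $a_{sd}$, $a_{si}$, $a_{id}$ ($i=1,\dots,M$) be mutually independent circularly symmetric complex Gaussian $\mathcal{CN}(0,1)$ channel gains (source to destination, source to relay $i$, relay $i$ to destination). Let the best relay $b$ be the index maximizing $\min\{|a_{si}|^2,|a_{id}|^2\}$, with gains $a_{sb}, a_{bd}$. Let $\rho>0$ be the SNR, $r\in(0,1/2)$ the multiplexing gain and $R = r\log\rho$ the code rate. Under opportunistic amplify-and-forward, the mutual information between source and destination is $$I = \tfrac12\log\bigl(1+\rho|a_{sd}|^2 + f(\rho|a_{sb}|^2, \rho|a_{bd}|^2)\bigr),\qquad f(x,y) = \frac{xy}{x+y+1},$$ and the outage probability is $P_e(\rho) = \Pr(I \leq R)$. Then opportunistic amplify-and-forward achieves the diversity-multiplexing tradeoff $d(r) = (M+1)(1-2r)$ for $r\in(0,1/2)$, where $d(r) = -\lim_{\rho\to\infty}\frac{\log P_e(\rho)}{\log\rho}$.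
   Context: Setting: the source transmits in the first half of the time slots; only the best relay (selected by the rule: largest $\min\{|a_{si}|^2,|a_{id}|^2\}$) amplifies and retransmits its received signal in the second half (orthogonal slots, half duplex); the destination combines the direct and relayed copies with a matched filter, with an i.i.d. Gaussian codebook. No channel knowledge is used at the physical layer. *)

theory Defs
  imports "HOL-Probability.Probability"
begin

definition cn_density :: "complex \<Rightarrow> ennreal" where
  "cn_density z = ennreal (exp (- ((cmod z)^2)) / pi)"

definition f_af :: "real \<Rightarrow> real \<Rightarrow> real" where
  "f_af x y = x * y / (x + y + 1)"

text \<open>Best relay: smallest index in {1..M} maximizing min(|a_si|^2, |a_id|^2)
  (ties occur with probability zero).\<close>
definition best_relay :: "nat \<Rightarrow> (nat \<Rightarrow> complex) \<Rightarrow> (nat \<Rightarrow> complex) \<Rightarrow> nat" where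
  "best_relay M asr ard = (LEAST i. i \<in> {1..M} \<and>
     (\<forall>j\<in>{1..M}. min ((cmod (asr j))^2) ((cmod (ard j))^2)
                  \<le> min ((cmod (asr i))^2) ((cmod (ard i))^2)))"

definition oaf_mutual_info ::
  "nat \<Rightarrow> real \<Rightarrow> complex \<Rightarrow> (nat \<Rightarrow> complex) \<Rightarrow> (nat \<Rightarrow> complex) \<Rightarrow> real" where
  "oaf_mutual_info M \<rho> asd asr ard =
     (let b = best_relay M asr ard in
      1/2 * ln (1 + \<rho> * (cmod asd)^2 + f_af (\<rho> * (cmod (asr b))^2) (\<rho> * (cmod (ard b))^2)))"

definition outage_prob ::
  "'a measure \<Rightarrow> nat \<Rightarrow> real \<Rightarrow> real \<Rightarrow> ('a \<Rightarrow> complex) \<Rightarrow> (nat \<Rightarrow> 'a \<Rightarrow> complex)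
   \<Rightarrow> (nat \<Rightarrow> 'a \<Rightarrow> complex) \<Rightarrow> real" where
  "outage_prob P M \<rho> r asd asr ard =
     measure P {\<omega> \<in> space P. oaf_mutual_info M \<rho> (asd \<omega>) (\<lambda>i. asr i \<omega>) (\<lambda>i. ard i \<omega>) \<le> r * ln \<rho>}"

datatype link = SD | SR nat | RD nat

definition link_gain :: "('a \<Rightarrow> complex) \<Rightarrow> (nat \<Rightarrow> 'a \<Rightarrow> complex) \<Rightarrow> (nat \<Rightarrow> 'a \<Rightarrow> complex)
   \<Rightarrow> link \<Rightarrow> 'a \<Rightarrow> complex" where
  "link_gain asd asr ard l = (case l of SD \<Rightarrow> asd | SR i \<Rightarrow> asr i | RD i \<Rightarrow> ard i)"

end

theory Submission imports Defs begin

lemma f_af_nonneg: "0 \<le> x \<Longrightarrow> 0 \<le> y \<Longrightarrow> 0 \<le> f_af x y"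
  unfolding f_af_def by simp

lemma f_af_le: "0 \<le> x \<Longrightarrow> 0 \<le> y \<Longrightarrow> f_af x y \<le> x"
  unfolding f_af_def by (simp add: divide_le_eq mult_left_mono)

lemma f_af_min_aux: assumes "0 \<le> x" "x \<le> y" "1 \<le> T" "f_af x y \<le> T" shows "x \<le> 3 * T"
proof (cases "y < 1")
  case True then show ?thesis using assms by linarith
next
  case False
  have d: "0 < x + y + 1" using assms by linarith
  have "x * y \<le> T * (x + y + 1)" using assms(4) d unfolding f_af_def by (simp add: divide_le_eq)
  also have "\<dots> \<le> T * (3 * y)" using assms False by (intro mult_left_mono) auto
  finally have "y * x \<le> y * (3 * T)" by (simp add: algebra_simps)
  then show ?thesis using False by (simp add: mult_le_cancel_left)
qed

lemma f_af_sym: "f_af x y = f_af y x"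
  unfolding f_af_def by (simp add: algebra_simps)

lemma f_af_min: assumes "0 \<le> x" "0 \<le> y" "1 \<le> T" "f_af x y \<le> T" shows "min x y \<le> 3 * T"
proof (cases "x \<le> y")
  case True then show ?thesis using f_af_min_aux[of x y T] assms by simp
next
  case False then show ?thesis using f_af_min_aux[of y x T] assms f_af_sym[of x y] by simp
qed

lemma best_relay_props:
  assumes "1 \<le> M"
  shows "best_relay M a d \<in> {1..M}"
    and "\<And>j. j \<in> {1..M} \<Longrightarrow> min ((cmod (a j))^2) ((cmod (d j))^2)
             \<le> min ((cmod (a (best_relay M a d)))^2) ((cmod (d (best_relay M a d)))^2)"
proof -
  define U where "U i = min ((cmod (a i))^2) ((cmod (d i))^2)" for i
  have fin: "finite (U ` {1..M})" "U ` {1..M} \<noteq> {}" using assms by auto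
  obtain i where i: "i \<in> {1..M}" "U i = Max (U ` {1..M})"
    using Max_in[OF fin] by auto
  have "\<exists>i. i \<in> {1..M} \<and> (\<forall>j\<in>{1..M}. U j \<le> U i)"
    using i fin by (intro exI[of _ i]) auto
  then have "best_relay M a d \<in> {1..M} \<and> (\<forall>j\<in>{1..M}. U j \<le> U (best_relay M a d))"
    unfolding best_relay_def U_def by (rule LeastI_ex)
  then show "best_relay M a d \<in> {1..M}"
    and "\<And>j. j \<in> {1..M} \<Longrightarrow> min ((cmod (a j))^2) ((cmod (d j))^2)
             \<le> min ((cmod (a (best_relay M a d)))^2) ((cmod (d (best_relay M a d)))^2)"
    unfolding U_def by auto
qed

lemma best_relay_cong:
  assumes "\<And>i. i \<in> {1..M} \<Longrightarrow> a i = a' i \<and> d i = d' i"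
  shows "best_relay M a d = best_relay M a' d'"
proof -
  have "(\<lambda>i. i \<in> {1..M} \<and>
     (\<forall>j\<in>{1..M}. min ((cmod (a j))^2) ((cmod (d j))^2) \<le> min ((cmod (a i))^2) ((cmod (d i))^2)))
    = (\<lambda>i. i \<in> {1..M} \<and>
     (\<forall>j\<in>{1..M}. min ((cmod (a' j))^2) ((cmod (d' j))^2) \<le> min ((cmod (a' i))^2) ((cmod (d' i))^2)))"
    using assms by (intro ext) auto
  then show ?thesis unfolding best_relay_def by simp
qed

lemma oaf_cong:
  assumes "1 \<le> M" "\<And>i. i \<in> {1..M} \<Longrightarrow> a i = a' i \<and> d i = d' i"
  shows "oaf_mutual_info M \<rho> x a d = oaf_mutual_info M \<rho> x a' d'"
proof -
  have b: "best_relay M a d = best_relay M a' d'" using assms(2) by (rule best_relay_cong)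
  have "best_relay M a d \<in> {1..M}" using assms(1) by (rule best_relay_props)
  then show ?thesis unfolding oaf_mutual_info_def Let_def using b assms(2) by metis
qed

lemma oaf_measurable:
  assumes [measurable]: "asd \<in> borel_measurable P" "\<And>i. asr i \<in> borel_measurable P" "\<And>i. ard i \<in> borel_measurable P"
  shows "(\<lambda>\<omega>. oaf_mutual_info M \<rho> (asd \<omega>) (\<lambda>i. asr i \<omega>) (\<lambda>i. ard i \<omega>)) \<in> borel_measurable P"
  unfolding oaf_mutual_info_def Let_def best_relay_def f_af_def
  by measurable

lemma outage_iff:
  assumes "1 < \<rho>" "0 \<le> x" "0 \<le> u" "0 \<le> v"
  shows "(1/2 * ln (1 + \<rho> * x + f_af (\<rho> * u) (\<rho> * v)) \<le> r * ln \<rho>)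
     = (1 + \<rho> * x + f_af (\<rho> * u) (\<rho> * v) \<le> \<rho> powr (2 * r))"
proof -
  have fp: "0 \<le> f_af (\<rho> * u) (\<rho> * v)" using assms by (intro f_af_nonneg) auto
  have pos: "0 < 1 + \<rho> * x + f_af (\<rho> * u) (\<rho> * v)" using assms fp by (simp add: add_pos_nonneg)
  have "(1/2 * ln (1 + \<rho> * x + f_af (\<rho> * u) (\<rho> * v)) \<le> r * ln \<rho>)
      = (ln (1 + \<rho> * x + f_af (\<rho> * u) (\<rho> * v)) \<le> ln (\<rho> powr (2 * r)))"
    using assms by (simp add: ln_powr mult_ac)
  also have "\<dots> = (1 + \<rho> * x + f_af (\<rho> * u) (\<rho> * v) \<le> \<rho> powr (2 * r))"
    using pos assms by (intro ln_le_cancel_iff) auto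
  finally show ?thesis .
qed

lemma sq_le_iff: "0 \<le> (a::real) \<Longrightarrow> 0 \<le> t \<Longrightarrow> (a \<le> sqrt t) = (a^2 \<le> t)"
  by (metis real_le_rsqrt real_sqrt_le_iff real_sqrt_unique)

lemma gain_emeasure_bounds:
  assumes P: "prob_space P" and X: "distributed P lborel X cn_density" and t: "0 \<le> t"
  shows "ennreal (t * exp (- t)) \<le> emeasure P {\<omega>\<in>space P. (cmod (X \<omega>))^2 \<le> t}"
    and "emeasure P {\<omega>\<in>space P. (cmod (X \<omega>))^2 \<le> t} \<le> ennreal t"
proof -
  define B where "B = cball (0::complex) (sqrt t)"
  have Bs: "B \<in> sets lborel" unfolding B_def by simp
  have Xm: "X \<in> measurable P lborel" using X by (rule distributed_measurable)
  have eqS: "{\<omega>\<in>space P. (cmod (X \<omega>))^2 \<le> t} = X -` B \<inter> space P"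
    unfolding B_def using t by (auto simp: dist_norm sq_le_iff)
  have "emeasure P (X -` B \<inter> space P) = emeasure (distr P lborel X) B"
    using Xm Bs by (simp add: emeasure_distr)
  also have "\<dots> = emeasure (density lborel cn_density) B"
    using X by (simp add: distributed_distr_eq_density)
  also have "\<dots> = (\<integral>\<^sup>+ z. cn_density z * indicator B z \<partial>lborel)"
    using Bs X by (subst emeasure_density) (auto dest: distributed_borel_measurable)
  finally have E: "emeasure P {\<omega>\<in>space P. (cmod (X \<omega>))^2 \<le> t} = (\<integral>\<^sup>+ z. cn_density z * indicator B z \<partial>lborel)"
    using eqS by simp
  have volB: "emeasure lborel B = ennreal (pi * t)"
    unfolding B_def using t by (simp add: emeasure_cball unit_ball_vol_2)
  have "(\<integral>\<^sup>+ z. cn_density z * indicator B z \<partial>lborel) \<le> (\<integral>\<^sup>+ z. ennreal (1/pi) * indicator B z \<partial>lborel)"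
    by (intro nn_integral_mono) (auto simp: cn_density_def indicator_def divide_right_mono intro!: ennreal_leI)
  also have "\<dots> = ennreal (1/pi) * emeasure lborel B"
    using Bs by (simp add: nn_integral_cmult_indicator)
  also have "\<dots> = ennreal t" using volB t by (simp add: ennreal_mult''[symmetric])
  finally show "emeasure P {\<omega>\<in>space P. (cmod (X \<omega>))^2 \<le> t} \<le> ennreal t" using E by simp
  have "ennreal (exp (-t) / pi) * emeasure lborel B = (\<integral>\<^sup>+ z. ennreal (exp (-t) / pi) * indicator B z \<partial>lborel)"
    using Bs by (simp add: nn_integral_cmult_indicator)
  also have "\<dots> \<le> (\<integral>\<^sup>+ z. cn_density z * indicator B z \<partial>lborel)"
  proof (intro nn_integral_mono)
    fix z show "ennreal (exp (- t) / pi) * indicator B z \<le> cn_density z * indicator B z"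
    proof (cases "z \<in> B")
      case True
      then have "cmod z \<le> sqrt t" unfolding B_def by (simp add: dist_norm)
      then have "(cmod z)^2 \<le> t" using t by (simp add: sq_le_iff)
      then show ?thesis using True by (auto simp: cn_density_def intro!: ennreal_leI divide_right_mono)
    qed simp
  qed
  finally have "ennreal (exp (-t) / pi) * emeasure lborel B \<le> emeasure P {\<omega>\<in>space P. (cmod (X \<omega>))^2 \<le> t}"
    using E by simp
  moreover have "ennreal (exp (-t) / pi) * emeasure lborel B = ennreal (t * exp (-t))"
    using volB t by (simp add: ennreal_mult''[symmetric])
  ultimately show "ennreal (t * exp (- t)) \<le> emeasure P {\<omega>\<in>space P. (cmod (X \<omega>))^2 \<le> t}" by simp
qed


lemma outage_bounds:
  fixes P :: "'a measure" and M :: nat and r :: real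
    and asd :: "'a \<Rightarrow> complex" and asr ard :: "nat \<Rightarrow> 'a \<Rightarrow> complex"
  assumes PS: "prob_space P"
    and M1: "M \<ge> 1"
    and "0 < r" and "r < 1/2"
    and IND: "prob_space.indep_vars P (\<lambda>_. borel) (link_gain asd asr ard)
           ({SD} \<union> SR ` {1..M} \<union> RD ` {1..M})"
    and D1: "distributed P lborel asd cn_density"
    and D2: "\<forall>i\<in>{1..M}. distributed P lborel (asr i) cn_density"
    and D3: "\<forall>i\<in>{1..M}. distributed P lborel (ard i) cn_density"
    and rho: "1 < \<rho>" "3 \<le> \<rho> powr (2 * r)"
  shows "(\<rho> powr (2*r-1) / 3 * exp (-1)) ^ (M+1) \<le> outage_prob P M \<rho> r asd asr ard"
    and "outage_prob P M \<rho> r asd asr ard \<le> 2^M * (3 * \<rho> powr (2*r-1)) ^ (M+1)"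
proof -
  interpret prob_space P by (fact PS)
  define lg where "lg = link_gain asd asr ard"
  define I where "I = {SD} \<union> SR ` {1..M} \<union> RD ` {1..M}"
  have lgs[simp]: "lg SD = asd" "lg (SR i) = asr i" "lg (RD i) = ard i" for i
    unfolding lg_def link_gain_def by simp_all
  have dlg: "distributed P lborel (lg j) cn_density" if "j \<in> I" for j
    using that D1 D2 D3 unfolding I_def by auto
  have ind: "indep_sets (\<lambda>j. sigma_sets (space P) {lg j -` A \<inter> space P | A. A \<in> sets borel}) I"
    using IND unfolding indep_vars_def lg_def I_def by simp
  define Ev where "Ev j t = {\<omega>\<in>space P. (cmod (lg j \<omega>))^2 \<le> t}" for j t
  have Ev_in: "Ev j t \<in> sigma_sets (space P) {lg j -` A \<inter> space P | A. A \<in> sets borel}" for j t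
  proof -
    have "{z::complex. (cmod z)^2 \<le> t} \<in> sets borel" by measurable
    then have "Ev j t \<in> {lg j -` A \<inter> space P | A. A \<in> sets borel}"
      unfolding Ev_def by (intro CollectI exI[of _ "{z::complex. (cmod z)^2 \<le> t}"]) auto
    then show ?thesis by (rule sigma_sets.Basic)
  qed
  have prodJ: "prob (\<Inter>j\<in>J. Ev j t) = (\<Prod>j\<in>J. prob (Ev j t))"
    if "J \<subseteq> I" "J \<noteq> {}" "finite J" for J t
    using Ev_in by (intro indep_setsD[OF ind that]) simp
  have pb: "t * exp (-t) \<le> prob (Ev j t) \<and> prob (Ev j t) \<le> t" if "j \<in> I" "0 \<le> t" for j t
    using gain_emeasure_bounds[OF PS dlg[OF that(1)] that(2)]
    unfolding Ev_def using that(2) by (simp add: emeasure_eq_measure ennreal_le_iff)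
  have Ev_ev: "Ev j t \<in> events" if "j \<in> I" for j t
    using dlg[OF that] unfolding Ev_def
    by (auto dest!: distributed_measurable simp: measurable_lborel2)

  define s where "s = \<rho> powr (2*r-1)"
  define T where "T = \<rho> powr (2*r)"
  have s0: "0 < s" unfolding s_def using rho by simp
  have s1: "s \<le> 1" unfolding s_def using rho \<open>r < 1/2\<close> by (intro less_imp_le[OF powr_less_one]) auto
  have rs: "\<rho> * s = T" unfolding s_def T_def using rho
    by (simp add: powr_add[symmetric] powr_mult_base)
  have T3: "3 \<le> T" using rho T_def by simp

  define Out where "Out = {\<omega> \<in> space P. oaf_mutual_info M \<rho> (asd \<omega>) (\<lambda>i. asr i \<omega>) (\<lambda>i. ard i \<omega>) \<le> r * ln \<rho>}"
  have Pe: "outage_prob P M \<rho> r asd asr ard = prob Out" unfolding outage_prob_def Out_def by simp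

  define bb where "bb \<omega> = best_relay M (\<lambda>i. asr i \<omega>) (\<lambda>i. ard i \<omega>)" for \<omega>
  have bbM: "bb \<omega> \<in> {1..M}" for \<omega> unfolding bb_def using M1 by (rule best_relay_props)
  have bbmax: "min ((cmod (asr j \<omega>))^2) ((cmod (ard j \<omega>))^2)
      \<le> min ((cmod (asr (bb \<omega>) \<omega>))^2) ((cmod (ard (bb \<omega>) \<omega>))^2)" if "j \<in> {1..M}" for j \<omega>
    unfolding bb_def using M1 that by (rule best_relay_props)
  have Oiff: "\<omega> \<in> Out \<longleftrightarrow> \<omega> \<in> space P \<and>
     1 + \<rho> * (cmod (asd \<omega>))^2 + f_af (\<rho> * (cmod (asr (bb \<omega>) \<omega>))^2) (\<rho> * (cmod (ard (bb \<omega>) \<omega>))^2) \<le> T" for \<omega>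
    unfolding Out_def oaf_mutual_info_def Let_def bb_def[symmetric] T_def
    using outage_iff[OF rho(1)] by simp

  define asr' where "asr' i = (if i \<in> {1..M} then asr i else (\<lambda>_. 0))" for i
  define ard' where "ard' i = (if i \<in> {1..M} then ard i else (\<lambda>_. 0))" for i
  have masd: "asd \<in> borel_measurable P" using D1 by (auto dest!: distributed_measurable simp: measurable_lborel2)
  have masr: "asr' i \<in> borel_measurable P" for i
    using D2 unfolding asr'_def by (auto dest!: distributed_measurable simp: measurable_lborel2)
  have mard: "ard' i \<in> borel_measurable P" for i
    using D3 unfolding ard'_def by (auto dest!: distributed_measurable simp: measurable_lborel2)
  have "(\<lambda>\<omega>. oaf_mutual_info M \<rho> (asd \<omega>) (\<lambda>i. asr' i \<omega>) (\<lambda>i. ard' i \<omega>)) \<in> borel_measurable P"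
    by (rule oaf_measurable[OF masd masr mard])
  moreover have "oaf_mutual_info M \<rho> (asd \<omega>) (\<lambda>i. asr' i \<omega>) (\<lambda>i. ard' i \<omega>)
     = oaf_mutual_info M \<rho> (asd \<omega>) (\<lambda>i. asr i \<omega>) (\<lambda>i. ard i \<omega>)" for \<omega>
    using M1 by (intro oaf_cong) (auto simp: asr'_def ard'_def)
  ultimately have mO: "(\<lambda>\<omega>. oaf_mutual_info M \<rho> (asd \<omega>) (\<lambda>i. asr i \<omega>) (\<lambda>i. ard i \<omega>)) \<in> borel_measurable P"
    by simp
  have Out_ev: "Out \<in> events" unfolding Out_def using mO by measurable

  define J0 where "J0 = insert SD (SR ` {1..M})"
  have J0I: "J0 \<subseteq> I" "J0 \<noteq> {}" "finite J0" unfolding J0_def I_def by auto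
  have cardJ0: "card J0 = M + 1"
    unfolding J0_def by (subst card_insert_disjoint) (auto simp: card_image inj_on_def)
  have sub0: "(\<Inter>j\<in>J0. Ev j (s/3)) \<subseteq> Out"
  proof
    fix \<omega> assume w: "\<omega> \<in> (\<Inter>j\<in>J0. Ev j (s/3))"
    then have sp: "\<omega> \<in> space P" unfolding J0_def Ev_def by auto
    have X: "(cmod (asd \<omega>))^2 \<le> s/3" using w unfolding J0_def Ev_def by auto
    have S: "(cmod (asr (bb \<omega>) \<omega>))^2 \<le> s/3" using w bbM[of \<omega>] unfolding J0_def Ev_def by auto
    have "f_af (\<rho> * (cmod (asr (bb \<omega>) \<omega>))^2) (\<rho> * (cmod (ard (bb \<omega>) \<omega>))^2) \<le> \<rho> * (cmod (asr (bb \<omega>) \<omega>))^2"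
      using rho by (intro f_af_le) auto
    also have "\<dots> \<le> \<rho> * (s/3)" using S rho by (intro mult_left_mono) auto
    finally have F: "f_af (\<rho> * (cmod (asr (bb \<omega>) \<omega>))^2) (\<rho> * (cmod (ard (bb \<omega>) \<omega>))^2) \<le> T/3"
      using rs by simp
    have "\<rho> * (cmod (asd \<omega>))^2 \<le> \<rho> * (s/3)" using X rho by (intro mult_left_mono) auto
    then have "\<rho> * (cmod (asd \<omega>))^2 \<le> T/3" using rs by simp
    then show "\<omega> \<in> Out" using F T3 sp Oiff by simp
  qed
  have "(\<Prod>j\<in>J0. s/3 * exp (-1)) \<le> (\<Prod>j\<in>J0. prob (Ev j (s/3)))"
  proof (intro prod_mono conjI)
    fix j assume j: "j \<in> J0"
    show "0 \<le> s/3 * exp (-1)" using s0 by simp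
    have "s/3 * exp (-1) \<le> s/3 * exp (-(s/3))" using s0 s1 by (intro mult_left_mono) auto
    also have "\<dots> \<le> prob (Ev j (s/3))" using pb[of j "s/3"] j J0I s0 by auto
    finally show "s/3 * exp (-1) \<le> prob (Ev j (s/3))" .
  qed
  also have "\<dots> = prob (\<Inter>j\<in>J0. Ev j (s/3))" using prodJ[OF J0I] by simp
  also have "\<dots> \<le> prob Out" using sub0 Out_ev by (rule finite_measure_mono)
  finally show "(\<rho> powr (2*r-1) / 3 * exp (-1)) ^ (M+1) \<le> outage_prob P M \<rho> r asd asr ard"
    using cardJ0 Pe s_def by simp

  define JJ where "JJ K = insert SD (SR ` K \<union> RD ` ({1..M} - K))" for K
  have JJI: "JJ K \<subseteq> I" "JJ K \<noteq> {}" "finite (JJ K)" if "K \<subseteq> {1..M}" for K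
    using that finite_subset[OF that] unfolding JJ_def I_def by auto
  have cardJJ: "card (JJ K) = M + 1" if "K \<subseteq> {1..M}" for K
  proof -
    have fK: "finite K" using that finite_subset by blast
    have "card (SR ` K \<union> RD ` ({1..M} - K)) = card (SR ` K) + card (RD ` ({1..M} - K))"
      using fK by (intro card_Un_disjoint) auto
    also have "\<dots> = card K + card ({1..M} - K)" by (simp add: card_image inj_on_def)
    also have "\<dots> = M"
    proof -
      have "card K \<le> card {1..M}" using that by (intro card_mono) auto
      then show ?thesis using that fK by (simp add: card_Diff_subset)
    qed
    finally show ?thesis unfolding JJ_def using fK by (subst card_insert_disjoint) auto
  qed
  have subU: "Out \<subseteq> (\<Union>K\<in>Pow {1..M}. \<Inter>j\<in>JJ K. Ev j (3 * s))"
  proof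
    fix \<omega> assume w: "\<omega> \<in> Out"
    then have sp: "\<omega> \<in> space P" and ineq: "1 + \<rho> * (cmod (asd \<omega>))^2 + f_af (\<rho> * (cmod (asr (bb \<omega>) \<omega>))^2) (\<rho> * (cmod (ard (bb \<omega>) \<omega>))^2) \<le> T"
      using Oiff by auto
    have fp: "0 \<le> f_af (\<rho> * (cmod (asr (bb \<omega>) \<omega>))^2) (\<rho> * (cmod (ard (bb \<omega>) \<omega>))^2)"
      using rho by (intro f_af_nonneg) auto
    have "\<rho> * (cmod (asd \<omega>))^2 \<le> \<rho> * s" using ineq fp rs by simp
    then have X: "(cmod (asd \<omega>))^2 \<le> 3 * s" using rho s0 by (simp add: mult_le_cancel_left)
    have Xnn: "0 \<le> \<rho> * (cmod (asd \<omega>))^2" using rho by simp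
    have Fle: "f_af (\<rho> * (cmod (asr (bb \<omega>) \<omega>))^2) (\<rho> * (cmod (ard (bb \<omega>) \<omega>))^2) \<le> T"
      using ineq Xnn by linarith
    have "min (\<rho> * (cmod (asr (bb \<omega>) \<omega>))^2) (\<rho> * (cmod (ard (bb \<omega>) \<omega>))^2) \<le> 3 * T"
      using Fle T3 rho by (intro f_af_min) auto
    then have "\<rho> * min ((cmod (asr (bb \<omega>) \<omega>))^2) ((cmod (ard (bb \<omega>) \<omega>))^2) \<le> \<rho> * (3 * s)"
      using rho rs by (simp add: min_mult_distrib_left)
    then have mb: "min ((cmod (asr (bb \<omega>) \<omega>))^2) ((cmod (ard (bb \<omega>) \<omega>))^2) \<le> 3 * s"
      using rho by (simp add: mult_le_cancel_left)
    define K where "K = {i\<in>{1..M}. (cmod (asr i \<omega>))^2 \<le> 3 * s}"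
    have "\<omega> \<in> (\<Inter>j\<in>JJ K. Ev j (3 * s))"
    proof
      fix j assume j: "j \<in> JJ K"
      show "\<omega> \<in> Ev j (3 * s)"
      proof (cases "j = SD")
        case True then show ?thesis using X sp unfolding Ev_def by simp
      next
        case False
        then consider i where "i \<in> K" "j = SR i" | i where "i \<in> {1..M} - K" "j = RD i"
          using j unfolding JJ_def by auto
        then show ?thesis
        proof cases
          case 1 then show ?thesis using sp unfolding Ev_def K_def by simp
        next
          case 2
          have "min ((cmod (asr i \<omega>))^2) ((cmod (ard i \<omega>))^2) \<le> 3 * s"
            using bbmax[of i \<omega>] 2 mb by (meson DiffD1 order_trans)
          then show ?thesis using 2 sp unfolding Ev_def K_def by auto
        qed
      qed
    qed
    moreover have "K \<in> Pow {1..M}" unfolding K_def by auto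
    ultimately show "\<omega> \<in> (\<Union>K\<in>Pow {1..M}. \<Inter>j\<in>JJ K. Ev j (3 * s))" by blast
  qed
  have INTev: "(\<Inter>j\<in>JJ K. Ev j (3 * s)) \<in> events" if "K \<subseteq> {1..M}" for K
    using JJI[OF that] Ev_ev by (intro sets.finite_INT) auto
  have UNev: "(\<Union>K\<in>Pow {1..M}. \<Inter>j\<in>JJ K. Ev j (3 * s)) \<in> events"
    using INTev by (intro sets.finite_UN) auto
  have "prob Out \<le> prob (\<Union>K\<in>Pow {1..M}. \<Inter>j\<in>JJ K. Ev j (3 * s))"
    using subU UNev by (intro finite_measure_mono)
  also have "\<dots> \<le> (\<Sum>K\<in>Pow {1..M}. prob (\<Inter>j\<in>JJ K. Ev j (3 * s)))"
    using INTev by (intro finite_measure_subadditive_finite) auto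
  also have "\<dots> \<le> (\<Sum>K\<in>Pow {1..M}. (3 * s) ^ (M+1))"
  proof (intro sum_mono)
    fix K assume K: "K \<in> Pow {1..M}"
    have "prob (\<Inter>j\<in>JJ K. Ev j (3 * s)) = (\<Prod>j\<in>JJ K. prob (Ev j (3 * s)))"
      using K by (intro prodJ JJI) auto
    also have "\<dots> \<le> (\<Prod>j\<in>JJ K. 3 * s)"
    proof (intro prod_mono conjI)
      fix j assume j: "j \<in> JJ K"
      then have "j \<in> I" using JJI K by auto
      then show "0 \<le> prob (Ev j (3 * s))" "prob (Ev j (3 * s)) \<le> 3 * s"
        using pb[of j "3 * s"] s0 by auto
    qed
    also have "\<dots> = (3 * s) ^ (M+1)" using cardJJ K by simp
    finally show "prob (\<Inter>j\<in>JJ K. Ev j (3 * s)) \<le> (3 * s) ^ (M+1)" .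
  qed
  also have "\<dots> = 2^M * (3 * s) ^ (M+1)" by (simp add: card_Pow)
  finally show "outage_prob P M \<rho> r asd asr ard \<le> 2^M * (3 * \<rho> powr (2*r-1)) ^ (M+1)"
    using Pe s_def by simp
qed


lemma ln_bounds_aux:
  fixes M :: nat and r \<rho> p :: real
  assumes rho: "1 < \<rho>"
    and lo: "(\<rho> powr (2*r-1) / 3 * exp (-1)) ^ (M+1) \<le> p"
    and up: "p \<le> 2^M * (3 * \<rho> powr (2*r-1)) ^ (M+1)"
  shows "real (M+1) * (2*r-1) + real (M+1) * (- ln 3 - 1) / ln \<rho> \<le> ln p / ln \<rho>"
    and "ln p / ln \<rho> \<le> real (M+1) * (2*r-1) + (real M * ln 2 + real (M+1) * ln 3) / ln \<rho>"
proof -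
  define s where "s = \<rho> powr (2*r-1)"
  define L where "L = ln \<rho>"
  have L0: "0 < L" unfolding L_def using rho by simp
  have s0: "0 < s" unfolding s_def using rho by simp
  have lns: "ln s = (2*r-1) * L" unfolding s_def L_def using rho by (simp add: ln_powr)
  have lp: "0 < (s / 3 * exp (-1)) ^ (M+1)" using s0 by simp
  have p0: "0 < p" using lp lo s_def by simp
  have "ln ((s / 3 * exp (-1)) ^ (M+1)) = real (M+1) * (ln s - ln 3 - 1)"
    using s0 by (simp add: ln_realpow ln_mult ln_div algebra_simps)
  also have "\<dots> = real (M+1) * (2*r-1) * L + real (M+1) * (- ln 3 - 1)"
    unfolding lns by (simp add: algebra_simps)
  finally have e1: "ln ((s / 3 * exp (-1)) ^ (M+1)) = real (M+1) * (2*r-1) * L + real (M+1) * (- ln 3 - 1)" .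
  have "ln ((s / 3 * exp (-1)) ^ (M+1)) \<le> ln p" using lp p0 lo s_def by simp
  then have "real (M+1) * (2*r-1) * L + real (M+1) * (- ln 3 - 1) \<le> ln p" using e1 by simp
  then have "(real (M+1) * (2*r-1) * L + real (M+1) * (- ln 3 - 1)) / L \<le> ln p / L"
    using L0 by (intro divide_right_mono) auto
  then show "real (M+1) * (2*r-1) + real (M+1) * (- ln 3 - 1) / ln \<rho> \<le> ln p / ln \<rho>"
    using L0 unfolding L_def[symmetric] by (simp add: add_divide_distrib)
  have up0: "0 < 2^M * (3 * s) ^ (M+1)" using s0 by simp
  have "ln (2^M * (3 * s) ^ (M+1)) = real M * ln 2 + real (M+1) * (ln 3 + ln s)"
    using s0 by (simp add: ln_realpow ln_mult algebra_simps)
  also have "\<dots> = real (M+1) * (2*r-1) * L + (real M * ln 2 + real (M+1) * ln 3)"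
    unfolding lns by (simp add: algebra_simps)
  finally have e2: "ln (2^M * (3 * s) ^ (M+1)) = real (M+1) * (2*r-1) * L + (real M * ln 2 + real (M+1) * ln 3)" .
  have "ln p \<le> ln (2^M * (3 * s) ^ (M+1))" using up0 p0 up s_def by simp
  then have "ln p \<le> real (M+1) * (2*r-1) * L + (real M * ln 2 + real (M+1) * ln 3)" using e2 by simp
  then have "ln p / L \<le> (real (M+1) * (2*r-1) * L + (real M * ln 2 + real (M+1) * ln 3)) / L"
    using L0 by (intro divide_right_mono) auto
  then show "ln p / ln \<rho> \<le> real (M+1) * (2*r-1) + (real M * ln 2 + real (M+1) * ln 3) / ln \<rho>"
    using L0 unfolding L_def[symmetric] by (simp add: add_divide_distrib)
qed

theorem theorem4:
  fixes P :: "'a measure" and M :: nat and r :: real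
    and asd :: "'a \<Rightarrow> complex" and asr ard :: "nat \<Rightarrow> 'a \<Rightarrow> complex"
  assumes "prob_space P"
    and "M \<ge> 1"
    and "0 < r" and "r < 1/2"
    and "prob_space.indep_vars P (\<lambda>_. borel) (link_gain asd asr ard)
           ({SD} \<union> SR ` {1..M} \<union> RD ` {1..M})"
    and "distributed P lborel asd cn_density"
    and "\<forall>i\<in>{1..M}. distributed P lborel (asr i) cn_density"
    and "\<forall>i\<in>{1..M}. distributed P lborel (ard i) cn_density"
  shows "((\<lambda>\<rho>. ln (outage_prob P M \<rho> r asd asr ard) / ln \<rho>)
           \<longlongrightarrow> - (real (M + 1) * (1 - 2 * r))) at_top"
proof -
  define c where "c = real (M+1) * (2*r-1)"
  define A where "A = real (M+1) * (- ln 3 - 1)"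
  define B where "B = real M * ln 2 + real (M+1) * ln 3"
  define \<rho>0 where "\<rho>0 = max 2 (3 powr (1 / (2*r)))"
  have ev: "eventually (\<lambda>\<rho>. 1 < \<rho> \<and> 3 \<le> \<rho> powr (2*r)) at_top"
  proof (rule eventually_at_top_linorderI[of \<rho>0])
    fix \<rho> assume h: "\<rho>0 \<le> \<rho>"
    then have r1: "1 < \<rho>" "3 powr (1 / (2*r)) \<le> \<rho>" unfolding \<rho>0_def by auto
    have "3 = (3 powr (1 / (2*r))) powr (2*r)" using assms(3) by (simp add: powr_powr)
    also have "\<dots> \<le> \<rho> powr (2*r)" using r1 assms(3) by (intro powr_mono2) auto
    finally show "1 < \<rho> \<and> 3 \<le> \<rho> powr (2*r)" using r1 by simp
  qed
  have lo: "eventually (\<lambda>\<rho>. c + A / ln \<rho> \<le> ln (outage_prob P M \<rho> r asd asr ard) / ln \<rho>) at_top"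
    using ev
  proof eventually_elim
    case (elim \<rho>)
    then show ?case unfolding c_def A_def
      using ln_bounds_aux(1)[OF _ outage_bounds(1)[OF assms] outage_bounds(2)[OF assms]] by blast
  qed
  have hi: "eventually (\<lambda>\<rho>. ln (outage_prob P M \<rho> r asd asr ard) / ln \<rho> \<le> c + B / ln \<rho>) at_top"
    using ev
  proof eventually_elim
    case (elim \<rho>)
    then show ?case unfolding c_def B_def
      using ln_bounds_aux(2)[OF _ outage_bounds(1)[OF assms] outage_bounds(2)[OF assms]] by blast
  qed
  have lnI: "filterlim (\<lambda>x::real. ln x) at_infinity at_top"
    by (rule filterlim_at_top_imp_at_infinity[OF ln_at_top])
  have tA: "((\<lambda>\<rho>. c + A / ln \<rho>) \<longlongrightarrow> c) at_top"
    using tendsto_add[OF tendsto_const tendsto_divide_0[OF tendsto_const lnI], of c A] by simp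
  have tB: "((\<lambda>\<rho>. c + B / ln \<rho>) \<longlongrightarrow> c) at_top"
    using tendsto_add[OF tendsto_const tendsto_divide_0[OF tendsto_const lnI], of c B] by simp
  have "((\<lambda>\<rho>. ln (outage_prob P M \<rho> r asd asr ard) / ln \<rho>) \<longlongrightarrow> c) at_top"
    by (rule tendsto_sandwich[OF lo hi tA tB])
  moreover have "c = - (real (M + 1) * (1 - 2 * r))" unfolding c_def by (simp add: algebra_simps)
  ultimately show ?thesis by simp
qed

end
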